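(* Let $q=p^r\ge 3$ and let $h,\bar h,t\in\mathbb{F}_q[x]$ be $$h(x)=\sum_{k=0}^{q-3}(k+1)x^k,\qquad \bar h(x)=1+x+\sum_{k=0}^{q-2}(-k)x^k,\qquad t(x)=x+\sum_{k=0}^{q-2}x^k .$$ Then: (1) $h(x^{q-2})\equiv \bar h(x) \pmod{x^q-x}$; (2) $\bar h(t(x))\equiv \bar h(x)\pmod{x^q-x}$.
   Context: $\mathbb{F}_q$ is the finite field with $q=p^r$ elements, $p$ prime. The integer coefficients $k+1$ and $-k$ are read in $\mathbb{F}_q$. Congruence modulo $x^q-x$ means the two polynomials induce the same function $\mathbb{F}_q\to\mathbb{F}_q$. *)

theory Defs
  imports "HOL-Computational_Algebra.Polynomial"
begin

definition h_poly :: "'a::{finite,field} poly" where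
  "h_poly = (\<Sum>k = 0..card (UNIV :: 'a set) - 3. monom (of_nat (k + 1)) k)"

definition hbar_poly :: "'a::{finite,field} poly" where
  "hbar_poly = 1 + [:0, 1:] + (\<Sum>k = 0..card (UNIV :: 'a set) - 2. monom (- of_nat k) k)"

definition t_poly :: "'a::{finite,field} poly" where
  "t_poly = [:0, 1:] + (\<Sum>k = 0..card (UNIV :: 'a set) - 2. monom 1 k)"

text \<open>Congruence modulo x^q - x: the two polynomials induce the same function on the field.\<close>
definition cong_xq :: "'a::{finite,field} poly \<Rightarrow> 'a poly \<Rightarrow> bool" where
  "cong_xq f g \<longleftrightarrow> (\<forall>a::'a. poly f a = poly g a)"

end

theory Submission
  imports Defs
begin

lemma card_zero: "of_nat (card (UNIV::'a::{finite,field} set)) = (0::'a)"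
proof -
  have "(\<Sum>x\<in>UNIV. x + 1) = (\<Sum>x\<in>(\<lambda>x. x+1) ` (UNIV::'a set). x)"
    by (subst sum.reindex) (auto simp: inj_on_def)
  also have "(\<lambda>x. x+1) ` (UNIV::'a set) = UNIV"
    by (rule surjI[of _ "\<lambda>x. x - 1"]) simp
  finally have "(\<Sum>x\<in>UNIV. x) + of_nat (card (UNIV::'a set)) = (\<Sum>x\<in>(UNIV::'a set). x)"
    by (simp add: sum.distrib)
  thus ?thesis by simp
qed

lemma fermat: assumes "(x::'a::{finite,field}) \<noteq> 0" shows "x ^ (card (UNIV::'a set) - 1) = 1"
proof -
  let ?N = "UNIV - {0::'a}"
  have "prod id ?N = prod id ((\<lambda>y. x*y) ` ?N)"
  proof -
    have "(\<lambda>y. x*y) ` ?N = ?N"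
    proof -
      have "y \<in> (*) x ` ?N" if "y \<noteq> 0" for y
        using image_eqI[of y "(*) x" "y/x" ?N] assms that by auto
      thus ?thesis using assms by auto
    qed
    thus ?thesis by simp
  qed
  also have "\<dots> = prod (\<lambda>y. x*y) ?N"
    by (subst prod.reindex) (use assms in \<open>auto simp: inj_on_def\<close>)
  also have "\<dots> = x ^ card ?N * prod id ?N"
    by (simp add: prod.distrib)
  finally have "(x ^ card ?N - 1) * prod id ?N = 0" by (simp add: algebra_simps)
  moreover have "prod id ?N \<noteq> 0" by simp
  moreover have "card ?N = card (UNIV::'a set) - 1" by (simp add: card_Diff_subset)
  ultimately show ?thesis by simp
qed

lemma geo: "((x::'a::comm_ring_1) - 1) * (\<Sum>k=0..n. x^k) = x^(n+1) - 1"
  by (induction n) (auto simp: algebra_simps)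

lemma Sid: "((x::'a::comm_ring_1) - 1) * (\<Sum>k=0..n. of_nat k * x^k) = of_nat n * x^(n+1) - (\<Sum>k=1..n. x^k)"
  by (induction n) (auto simp: algebra_simps)

lemma shift: "(y::'a::comm_ring_1) * (\<Sum>k=0..n. of_nat (k+1) * y^k) = (\<Sum>k=0..Suc n. of_nat k * y^k)"
  by (induction n) (auto simp: algebra_simps)

lemma gauss2: "2 * (\<Sum>k=0..n. (of_nat k::'a::comm_ring_1)) = of_nat n * of_nat (n+1)"
  by (induction n) (auto simp: algebra_simps)

lemma char2sum: assumes "(2::'a::comm_ring_1) = 0"
  shows "(\<Sum>k=0..4*j+2. (of_nat k::'a)) = 1"
proof (induction j)
  case 0 then show ?case using assms by (simp add: numeral_eq_Suc)
next
  case (Suc j)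
  have e: "4 * Suc j + 2 = Suc(Suc(Suc(Suc(4*j+2))))" by simp
  have "(of_nat (4*j+3) + of_nat (4*j+4) + of_nat (4*j+5) + of_nat (4*j+6) :: 'a) = of_nat (2 * (8*j+9))"
    by (simp add: algebra_simps)
  also have "\<dots> = 0" using assms by (simp only: of_nat_mult) simp
  finally have z: "(of_nat (4*j+3) + of_nat (4*j+4) + of_nat (4*j+5) + of_nat (4*j+6) :: 'a) = 0" .
  show ?case unfolding e using Suc z by (simp add: algebra_simps)
qed


lemma sum_at0: "(\<Sum>k=0..n. f k * (0::'a::comm_ring_1)^k) = f 0"
  by (induction n) auto

lemma char2_dvd:
  assumes two: "(2::'a::{finite,field}) = 0" and q3: "card (UNIV::'a set) \<ge> 3"
  shows "4 dvd card (UNIV::'a set)"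
proof -
  have c2: "y + y = 0" for y :: 'a using two by (metis mult_2 mult_zero_left)
  have neg: "- y = y" for y :: 'a using c2 by (simp add: neg_eq_iff_add_eq_0)
  obtain a :: 'a where a0: "a \<noteq> 0" and a1: "a \<noteq> 1"
  proof -
    have "\<not> UNIV \<subseteq> {0::'a, 1}"
    proof
      assume "UNIV \<subseteq> {0::'a, 1}"
      hence "card (UNIV::'a set) \<le> card {0::'a,1}" by (intro card_mono) auto
      also have "\<dots> \<le> 2" by (simp add: card_insert_if)
      finally show False using q3 by simp
    qed
    thus ?thesis using that by blast
  qed
  have a1': "a + 1 \<noteq> 0"
  proof
    assume "a + 1 = 0" hence "a = - 1" by (simp add: eq_neg_iff_add_eq_0)
    thus False using a1 neg by simp
  qed
  define H where "H = {0::'a, 1, a, a+1}"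
  have cardH: "card H = 4" unfolding H_def using a0 a1 a1'
    by (auto simp: card_insert_if)
  have addH: "u + v \<in> H" if "u \<in> H" "v \<in> H" for u v
  proof -
    have e1: "a + (a + 1) = 1" "(a + 1) + a = 1" "(a+1) + (a+1) = 0" "1 + (a + 1) = a" "(a+1) + 1 = a" "1 + a = a + 1"
    proof -
      have x1: "a + (a + 1) = 1" by (simp add: add.assoc[symmetric] c2)
      have x2: "(a + 1) + a = 1" using x1 by (simp add: add.commute)
      have x3: "1 + (a + 1) = a" by (metis add.assoc add.commute add_0 c2)
      have x4: "(a + 1) + 1 = a" by (metis add.assoc add.commute add_0 c2)
      show "a + (a + 1) = 1" "(a + 1) + a = 1" "(a+1) + (a+1) = 0" "1 + (a + 1) = a" "(a+1) + 1 = a" "1 + a = a + 1"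
        using x1 x2 x3 x4 c2 by (simp_all add: add.commute)
    qed
    show ?thesis using that unfolding H_def by (auto simp only: e1 c2 add_0 add_0_right insert_iff singleton_iff)
  qed
  define B where "B x = (\<lambda>h. x + h) ` H" for x
  have cardB: "card (B x) = 4" for x unfolding B_def
    by (subst card_image) (auto simp: inj_on_def cardH)
  have xB: "x \<in> B x" for x unfolding B_def H_def by force
  have sub: "B z \<subseteq> B x" if zx: "z \<in> B x" for x z
  proof
    fix w assume "w \<in> B z"
    then obtain h where h: "h \<in> H" "w = z + h" unfolding B_def by auto
    obtain h0 where h0: "h0 \<in> H" "z = x + h0" using zx unfolding B_def by auto
    have "w = x + (h0 + h)" using h h0 by (simp add: add.assoc)
    thus "w \<in> B x" unfolding B_def using addH h h0 by blast
  qed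
  have same: "B z = B x" if zx: "z \<in> B x" for x z
  proof
    show "B z \<subseteq> B x" using sub zx .
    obtain h0 where h0: "h0 \<in> H" "z = x + h0" using zx unfolding B_def by auto
    have "x = z + h0" using h0 c2 by (simp add: add.assoc)
    hence "x \<in> B z" unfolding B_def using h0 by blast
    thus "B x \<subseteq> B z" using sub by blast
  qed
  have "4 * card (range B) = card (\<Union>(range B))"
  proof (rule card_partition)
    show "\<And>c1 c2. c1 \<in> range B \<Longrightarrow> c2 \<in> range B \<Longrightarrow> c1 \<noteq> c2 \<Longrightarrow> c1 \<inter> c2 = {}"
      using same by blast
  qed (auto simp: cardB)
  moreover have "\<Union>(range B) = UNIV" using xB by blast
  ultimately show ?thesis by (metis dvd_triv_left)
qed


theorem mainTheorem1:
  assumes "card (UNIV :: 'a::{finite,field} set) \<ge> 3"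
  shows "cong_xq (pcompose (h_poly :: 'a poly) (monom 1 (card (UNIV :: 'a set) - 2))) hbar_poly \<and>
         cong_xq (pcompose (hbar_poly :: 'a poly) t_poly) hbar_poly"
proof -
  define q where "q = card (UNIV :: 'a set)"
  define m where "m = q - 2"
  have qm: "q = m + 2" and m1: "m \<ge> 1" using assms unfolding q_def m_def by auto
  have ofq: "(of_nat q :: 'a) = 0" unfolding q_def by (rule card_zero)
  have ofm: "(of_nat m :: 'a) = -2" using ofq unfolding qm by (simp add: eq_neg_iff_add_eq_0 add.commute)
  define S where "S x = (\<Sum>k=0..m. of_nat k * x^k)" for x :: 'a
  define G where "G x = (\<Sum>k=0..m. x^k)" for x :: 'a
  have hbar: "poly hbar_poly x = 1 + x - S x" for x :: 'a
    unfolding hbar_poly_def S_def m_def q_def by (simp add: poly_sum poly_monom sum_negf)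
  have tp: "poly t_poly x = x + G x" for x :: 'a
    unfolding t_poly_def G_def m_def q_def by (simp add: poly_sum poly_monom)
  have hp: "poly h_poly y = (\<Sum>k=0..m-1. of_nat (k+1) * y^k)" for y :: 'a
    unfolding h_poly_def m_def q_def by (simp add: poly_sum poly_monom numeral_eq_Suc)
  have hS: "y * poly h_poly y = S y" for y :: 'a
    unfolding hp S_def using shift[of y "m-1"] m1 by simp
  have h0: "poly h_poly (0::'a) = 1" unfolding hp using sum_at0[of "\<lambda>k. of_nat (k+1)" "m-1"] by simp
  have S0: "S 0 = 0" unfolding S_def using sum_at0[of "\<lambda>k. of_nat k" m] by simp
  have G0: "G 0 = 1" unfolding G_def using sum_at0[of "\<lambda>k. 1" m] by simp
  have G1: "G 1 = -1" unfolding G_def using ofm by simp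
  have S1: "S 1 = 1"
  proof (cases "(2::'a) = 0")
    case True
    have "4 dvd q" unfolding q_def using char2_dvd[OF True] assms by simp
    then obtain j where "q = 4 * j" by blast
    with qm m1 have "m = 4 * (j - 1) + 2" by auto
    thus ?thesis unfolding S_def using char2sum[OF True, of "j-1"] by simp
  next
    case False
    have "2 * S 1 = of_nat m * of_nat (m+1)" unfolding S_def using gauss2[of m] by simp
    also have "\<dots> = 2" using ofm by simp
    finally show ?thesis using False by simp
  qed
  have h1: "poly h_poly (1::'a) = 1" using hS[of 1] S1 by simp
  have generic: "G x = 0 \<and> (x - 1) * S x = -1" if "x \<noteq> 0" "x \<noteq> 1" for x
  proof -
    have xp: "x ^ (m+1) = 1" using fermat[OF that(1)] unfolding q_def[symmetric] qm by simp
    have "(x - 1) * G x = 0" unfolding G_def geo xp by simp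
    hence g: "G x = 0" using that by simp
    have "(\<Sum>k=0..m. x^k) = 1 + (\<Sum>k=1..m. x^k)" by (subst sum.atLeast_Suc_atMost) auto
    hence "(\<Sum>k=1..m. x^k) = -1" using g unfolding G_def by (simp add: eq_neg_iff_add_eq_0 add.commute)
    hence "(x - 1) * S x = -1" unfolding S_def Sid xp using ofm by simp
    with g show ?thesis by simp
  qed
  have part1: "poly h_poly (x ^ m) = poly hbar_poly x" for x :: 'a
  proof -
    consider "x = 0" | "x = 1" | "x \<noteq> 0" "x \<noteq> 1" by blast
    thus ?thesis
    proof cases
      case 1 thus ?thesis using m1 h0 hbar S0 by (simp add: power_0_left)
    next
      case 2 thus ?thesis using h1 hbar S1 by simp
    next
      case 3
      define y where "y = x ^ m"
      have xp: "x ^ (m+1) = 1" using fermat[OF 3(1)] unfolding q_def[symmetric] qm by simp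
      hence yx: "y * x = 1" unfolding y_def by (simp add: mult.commute)
      hence y: "y = 1 / x" using 3 by (simp add: field_simps)
      have y0: "y \<noteq> 0" "y \<noteq> 1" using y 3 by auto
      have Sx: "S x = -1 / (x - 1)" using generic[OF 3] 3 by (simp add: field_simps)
      have Sy: "S y = -1 / (y - 1)" using generic[OF y0] y0 by (simp add: field_simps)
      have hy: "poly h_poly y = S y / y" using hS[of y] y0 by (simp add: field_simps)
      have "S y / y = (-1/(y-1))/y" using Sy by simp
      also have "\<dots> = 1 + x - (-1/(x-1))" unfolding y using 3
        by (simp add: field_simps)
      also have "\<dots> = 1 + x - S x" using Sx by simp
      finally have "S y / y = 1 + x - S x" .
      hence "poly h_poly y = 1 + x - S x" using hy by simp
      thus ?thesis unfolding y_def hbar .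
    qed
  qed
  have part2: "poly t_poly x \<in> {0, 1} \<and> x \<in> {0,1} \<or> poly t_poly x = x" for x :: 'a
  proof -
    consider "x = 0" | "x = 1" | "x \<noteq> 0" "x \<noteq> 1" by blast
    thus ?thesis
    proof cases
      case 3 thus ?thesis using generic[OF 3] tp by simp
    qed (auto simp: tp G0 G1)
  qed
  have hb01: "poly hbar_poly (0::'a) = poly hbar_poly 1" using hbar S0 S1 by simp
  show ?thesis unfolding cong_xq_def
  proof (intro conjI allI)
    fix a :: 'a
    show "poly (h_poly \<circ>\<^sub>p monom 1 (card (UNIV::'a set) - 2)) a = poly hbar_poly a"
      using part1[of a] unfolding m_def q_def by (simp add: poly_pcompose poly_monom)
    show "poly (hbar_poly \<circ>\<^sub>p t_poly) a = poly hbar_poly a"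
      using part2[of a] hb01 by (auto simp: poly_pcompose)
  qed
qed

end
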